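(* For every $t\in(0,1)$ and every $h>0$, with $a=t/h$ and $b=(1-t)/h$, $$\lim_{n \to \infty} \sum_{k \ge 0} B^{n-k}_k(t;h) = \int_0^1 \frac{x^{a-1}(1-x)^{b-1}}{(1+x)\,\mathrm{B}(a,b)}\,dx,$$ where $\mathrm{B}(a,b)$ is the Beta function.
   Context: For $h\ge 0$, the $h$-Bernstein polynomials are $$B^m_k(t;h) = \binom{m}{k}\frac{\prod_{i=0}^{k-1}(t+ih)\prod_{i=0}^{m-k-1}(1-t+ih)}{\prod_{i=0}^{m-1}(1+ih)}$$ for integers $0\le k\le m$ (empty products equal $1$), and $B^m_k(t;h)=0$ for $m<k$. *)

theory Defs
  imports "HOL-Analysis.Analysis"
begin

definition hBernstein :: "nat \<Rightarrow> nat \<Rightarrow> real \<Rightarrow> real \<Rightarrow> real" where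
  "hBernstein m k t h =
     (if k \<le> m then
        real (m choose k) * (\<Prod>i<k. t + real i * h) * (\<Prod>i<m - k. 1 - t + real i * h)
          / (\<Prod>i<m. 1 + real i * h)
      else 0)"

end

theory Submission
  imports Defs
begin


definition FF :: "real \<Rightarrow> real \<Rightarrow> nat \<Rightarrow> real" where
  "FF x y n = (\<Sum>k\<le>n. real ((n-k) choose k) * x^k * y^(n-2*k))"

lemma FF_rec: "FF x y (Suc (Suc n)) = y * FF x y (Suc n) + x * FF x y n"
proof -
  have A: "FF x y (Suc (Suc n)) = y^(Suc (Suc n)) +
     (\<Sum>k\<le>Suc n. real ((Suc n - k) choose Suc k) * x^Suc k * y^(n-2*k))"
    unfolding FF_def by (subst sum.atMost_Suc_shift) simp
  have B: "(\<Sum>k\<le>Suc n. real ((Suc n - k) choose Suc k) * x^Suc k * y^(n-2*k))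
     = (\<Sum>k\<le>n. real ((n - k) choose k) * x^Suc k * y^(n-2*k))
     + (\<Sum>k\<le>n. real ((n - k) choose Suc k) * x^Suc k * y^(n-2*k))" (is "_ = ?rhs")
  proof -
    have "(\<Sum>k\<le>Suc n. real ((Suc n - k) choose Suc k) * x^Suc k * y^(n-2*k))
       = (\<Sum>k\<le>n. real ((Suc n - k) choose Suc k) * x^Suc k * y^(n-2*k))"
      by simp
    also have "\<dots> = (\<Sum>k\<le>n. real ((n - k) choose k) * x^Suc k * y^(n-2*k)
                   + real ((n - k) choose Suc k) * x^Suc k * y^(n-2*k))"
    proof (rule sum.cong[OF refl])
      fix k assume "k \<in> {..n}"
      then have "Suc n - k = Suc (n - k)" by auto
      then show "real ((Suc n - k) choose Suc k) * x^Suc k * y^(n-2*k)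
         = real ((n - k) choose k) * x^Suc k * y^(n-2*k)
                   + real ((n - k) choose Suc k) * x^Suc k * y^(n-2*k)"
        by (simp add: algebra_simps)
    qed
    also have "\<dots> = ?rhs" by (simp add: sum.distrib)
    finally show ?thesis .
  qed
  have C: "x * FF x y n = (\<Sum>k\<le>n. real ((n - k) choose k) * x^Suc k * y^(n-2*k))"
    unfolding FF_def by (simp add: sum_distrib_left algebra_simps)
  have D: "y * FF x y (Suc n) = y^(Suc (Suc n)) +
      (\<Sum>k\<le>n. real ((n - k) choose Suc k) * x^Suc k * y^(n-2*k))"
  proof -
    have "y * FF x y (Suc n) = y * (y^Suc n + (\<Sum>k\<le>n. real ((n - k) choose Suc k) * x^Suc k * y^(n-1-2*k)))"
      unfolding FF_def by (subst sum.atMost_Suc_shift) simp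
    also have "\<dots> = y^(Suc (Suc n)) + (\<Sum>k\<le>n. real ((n - k) choose Suc k) * x^Suc k * (y * y^(n-1-2*k)))"
      by (simp add: sum_distrib_left algebra_simps)
    also have "(\<Sum>k\<le>n. real ((n - k) choose Suc k) * x^Suc k * (y * y^(n-1-2*k)))
       = (\<Sum>k\<le>n. real ((n - k) choose Suc k) * x^Suc k * y^(n-2*k))"
    proof (rule sum.cong[OF refl])
      fix k assume "k \<in> {..n}"
      show "real ((n - k) choose Suc k) * x^Suc k * (y * y^(n-1-2*k))
         = real ((n - k) choose Suc k) * x^Suc k * y^(n-2*k)"
      proof (cases "Suc k \<le> n - k")
        case True
        then have "n - 2*k = Suc (n-1-2*k)" by auto
        then show ?thesis by simp
      qed simp
    qed
    finally show ?thesis .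
  qed
  show ?thesis using A B C D by simp
qed

lemma FF_closed: "FF x (1 - x) n = (\<Sum>i\<le>n. (-x)^i)"
proof (induction n rule: nat_less_induct)
  case (1 n)
  show ?case
  proof (cases n)
    case 0 then show ?thesis by (simp add: FF_def)
  next
    case (Suc m)
    show ?thesis
    proof (cases m)
      case 0 then show ?thesis using Suc by (simp add: FF_def)
    next
      case (Suc j)
      have "FF x (1-x) n = (1-x) * FF x (1-x) (Suc j) + x * FF x (1-x) j"
        using Suc \<open>n = Suc m\<close> FF_rec by simp
      also have "\<dots> = (1-x) * (\<Sum>i\<le>Suc j. (-x)^i) + x * (\<Sum>i\<le>j. (-x)^i)"
        using 1 Suc \<open>n = Suc m\<close> by simp
      also have "\<dots> = (\<Sum>i\<le>n. (-x)^i)"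
        using Suc \<open>n = Suc m\<close> by (simp add: algebra_simps)
      finally show ?thesis .
    qed
  qed
qed



lemma prod_shift_h:
  assumes "h > 0"
  shows "(\<Prod>i<k. c + real i * h) = h^k * pochhammer (c/h) k"
proof -
  have "(\<Prod>i<k. c + real i * h) = (\<Prod>i<k. h * (c/h + real i))"
    using assms by (intro prod.cong) (auto simp: field_simps)
  also have "\<dots> = h^k * (\<Prod>i<k. c/h + real i)"
    by (simp add: prod.distrib)
  also have "(\<Prod>i<k. c/h + real i) = pochhammer (c/h) k"
    by (simp add: pochhammer_prod lessThan_atLeast0)
  finally show ?thesis .
qed

lemma hBernstein_poch:
  assumes "h > 0" "k \<le> m"
  shows "hBernstein m k t h = real (m choose k) * pochhammer (t/h) k * pochhammer ((1-t)/h) (m-k)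
           / pochhammer (t/h + (1-t)/h) m"
proof -
  have e: "t/h + (1-t)/h = 1/h" by (simp add: add_divide_distrib[symmetric])
  have p: "pochhammer (1/h) m > 0" using assms by (intro pochhammer_pos) simp
  have "hBernstein m k t h = real (m choose k) * (h^k * pochhammer (t/h) k) * (h^(m-k) * pochhammer ((1-t)/h) (m-k))
          / (h^m * pochhammer (1/h) m)"
    unfolding hBernstein_def using assms by (simp add: prod_shift_h[OF assms(1)])
  also have "h^m = h^k * h^(m-k)" using assms by (simp add: power_add[symmetric])
  finally show ?thesis using assms p e by (simp add: field_simps)
qed

lemma Beta_shift:
  fixes a b :: real
  assumes "a > 0" "b > 0"
  shows "Beta (a + real k) (b + real m) = Beta a b * pochhammer a k * pochhammer b m / pochhammer (a+b) (k+m)"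
proof -
  have na: "a \<notin> \<int>\<^sub>\<le>\<^sub>0" "b \<notin> \<int>\<^sub>\<le>\<^sub>0" "a + b \<notin> \<int>\<^sub>\<le>\<^sub>0" using assms by (auto elim!: nonpos_Ints_cases)
  have g: "Gamma a > 0" "Gamma b > 0" "Gamma (a+b) > 0" "Gamma (a + b + real (k+m)) > 0"
    using assms by (auto intro!: Gamma_real_pos)
  show ?thesis
    unfolding Beta_def
    using na g
    by (simp add: pochhammer_Gamma field_simps add_ac)
qed



lemma powr_pow_merge:
  fixes x a :: real
  assumes "x \<ge> 0"
  shows "x powr (a - 1) * x^k = x powr (a + real k - 1)"
proof (cases "x = 0")
  case True then show ?thesis by simp
next
  case False
  then have "x > 0" using assms by simp
  then show ?thesis by (simp add: powr_realpow[symmetric] powr_add[symmetric] algebra_simps)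
qed

lemma beta_int:
  fixes a b :: real and k m :: nat
  assumes "a > 0" "b > 0"
  defines "G \<equiv> (\<lambda>x. indicator {0..1} x * (x powr (a-1) * (1-x) powr (b-1)) * (x^k * (1-x)^m))"
  shows "integrable lborel G" "integral\<^sup>L lborel G = Beta (a + real k) (b + real m)"
proof -
  have eq: "G = (\<lambda>x. indicator {0..1} x *\<^sub>R (x powr (a + real k - 1) * (1-x) powr (b + real m - 1)))"
  proof
    fix x
    show "G x = indicator {0..1} x *\<^sub>R (x powr (a + real k - 1) * (1-x) powr (b + real m - 1))"
    proof (cases "x \<in> {0..1}")
      case True
      then have "x powr (a-1) * x^k = x powr (a + real k - 1)"
        "(1-x) powr (b-1) * (1-x)^m = (1-x) powr (b + real m - 1)"
        by (auto intro!: powr_pow_merge)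
      then show ?thesis using True unfolding G_def by (simp add: algebra_simps)
    qed (simp add: G_def)
  qed
  have si: "set_integrable lborel {0..1} (\<lambda>x. x powr (a + real k - 1) * (1-x) powr (b + real m - 1))"
    using integrable_Beta[of "a + real k" "b + real m"] assms by simp
  then show "integrable lborel G" unfolding eq set_integrable_def .
  have "integral\<^sup>L lborel G = (LINT x:{0..1}|lborel. x powr (a + real k - 1) * (1-x) powr (b + real m - 1))"
    unfolding eq set_lebesgue_integral_def ..
  also have "\<dots> = integral {0..1} (\<lambda>x. x powr (a + real k - 1) * (1-x) powr (b + real m - 1))"
    by (rule set_borel_integral_eq_integral(2)[OF si])
  also have "\<dots> = Beta (a + real k) (b + real m)"
    using has_integral_Beta_real[of "a + real k" "b + real m"] assms by (simp add: integral_unique)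
  finally show "integral\<^sup>L lborel G = Beta (a + real k) (b + real m)" .
qed


lemma FF_bound:
  fixes x :: real
  assumes "0 \<le> x" "x \<le> 1"
  shows "\<bar>FF x (1-x) n\<bar> \<le> 2"
proof -
  have e: "(1 + x) * FF x (1-x) n = 1 - (-x)^Suc n"
    using sum_gp_basic[of "-x" n] by (simp add: FF_closed)
  have "\<bar>(-x)^Suc n\<bar> = x^Suc n" using assms by (simp only: power_abs abs_minus_cancel abs_of_nonneg)
  moreover have "x^Suc n \<le> 1" using assms by (intro power_le_one) auto
  ultimately have "\<bar>(-x)^Suc n\<bar> \<le> 1" by simp
  then have "\<bar>(1 + x) * FF x (1-x) n\<bar> \<le> 2" unfolding e by linarith
  moreover have "\<bar>(1 + x) * FF x (1-x) n\<bar> = (1 + x) * \<bar>FF x (1-x) n\<bar>"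
    using assms by (simp add: abs_mult)
  moreover have "1 * \<bar>FF x (1-x) n\<bar> \<le> (1 + x) * \<bar>FF x (1-x) n\<bar>"
    using assms by (intro mult_right_mono) auto
  ultimately show ?thesis by linarith
qed

lemma FF_lim:
  fixes x :: real
  assumes "0 \<le> x" "x < 1"
  shows "(\<lambda>n. FF x (1-x) n) \<longlonglongrightarrow> 1 / (1 + x)"
proof -
  have "(\<lambda>n. (-x)^n) sums (1 / (1 - (-x)))"
    using assms by (intro geometric_sums) simp
  then have "(\<lambda>n. \<Sum>i\<le>n. (-x)^i) \<longlonglongrightarrow> 1 / (1 + x)"
    by (simp add: sums_def_le)
  then show ?thesis by (simp add: FF_closed)
qed

theorem mainTheorem11:
  fixes t h :: real
  assumes "0 < t" and "t < 1" and "0 < h"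
  shows "(\<lambda>n. \<Sum>k\<le>n. hBernstein (n - k) k t h) \<longlonglongrightarrow>
    (LBINT x=0..1. x powr (t / h - 1) * (1 - x) powr ((1 - t) / h - 1)
                    / ((1 + x) * Beta (t / h) ((1 - t) / h)))"
proof -
  define a where "a = t / h"
  define b where "b = (1 - t) / h"
  have a: "a > 0" and b: "b > 0" using assms by (auto simp: a_def b_def)
  define B where "B = Beta a b"
  have Bpos: "B > 0" unfolding B_def Beta_def using a b by (auto intro!: Gamma_real_pos divide_pos_pos mult_pos_pos)
  define g where "g = (\<lambda>x::real. indicator {0..1} x * (x powr (a-1) * (1-x) powr (b-1)))"
  have gnn: "g x \<ge> 0" for x unfolding g_def by (auto simp: indicator_def)
  define G where "G = (\<lambda>k m x. g x * (x^k * (1-x)^m))"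
  have Gint: "integrable lborel (G k m)" and Gval: "integral\<^sup>L lborel (G k m) = Beta (a + real k) (b + real m)" for k m
    using beta_int[OF a b, of k m] unfolding G_def g_def by auto
  define s where "s = (\<lambda>n x. g x * FF x (1-x) n / B)"
  define f where "f = (\<lambda>x. g x / ((1 + x) * B))"
  have hterm: "hBernstein (n - k) k t h = real ((n-k) choose k) * integral\<^sup>L lborel (G k (n-2*k)) / B"
    if "k \<le> n" for n k
  proof (cases "k \<le> n - k")
    case True
    have e1: "n - k - k = n - 2*k" "k + (n - 2*k) = n - k" using True by auto
    have "hBernstein (n - k) k t h = real ((n-k) choose k) * pochhammer a k * pochhammer b (n-2*k)
           / pochhammer (a+b) (n-k)"
      using hBernstein_poch[OF assms(3) True] e1 unfolding a_def b_def by simp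
    moreover have "integral\<^sup>L lborel (G k (n-2*k)) = B * pochhammer a k * pochhammer b (n-2*k) / pochhammer (a+b) (n-k)"
      using Gval Beta_shift[OF a b, of k "n-2*k"] e1 unfolding B_def by simp
    ultimately show ?thesis using Bpos by simp
  next
    case False
    then show ?thesis by (simp add: hBernstein_def)
  qed
  have sfun: "s n x = (\<Sum>k\<le>n. real ((n-k) choose k) * G k (n-2*k) x / B)" for n x
    unfolding s_def G_def FF_def sum_distrib_left sum_divide_distrib
    by (intro sum.cong refl) (simp add: mult_ac)
  have sum_eq: "(\<Sum>k\<le>n. hBernstein (n - k) k t h) = integral\<^sup>L lborel (s n)" for n
  proof -
    have "(\<Sum>k\<le>n. hBernstein (n - k) k t h) = (\<Sum>k\<le>n. integral\<^sup>L lborel (\<lambda>x. real ((n-k) choose k) * G k (n-2*k) x / B))"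
      using hterm by (intro sum.cong) auto
    also have "\<dots> = integral\<^sup>L lborel (\<lambda>x. \<Sum>k\<le>n. real ((n-k) choose k) * G k (n-2*k) x / B)"
      by (rule Bochner_Integration.integral_sum[symmetric]) (intro integrable_divide integrable_mult_right Gint)
    also have "\<dots> = integral\<^sup>L lborel (s n)"
      by (rule Bochner_Integration.integral_cong[OF refl])
         (simp add: sfun)
    finally show ?thesis .
  qed
  have sint: "integrable lborel (s n)" for n
  proof -
    have "integrable lborel (\<lambda>x. \<Sum>k\<le>n. real ((n-k) choose k) * G k (n-2*k) x / B)"
      by (intro Bochner_Integration.integrable_sum integrable_divide integrable_mult_right Gint)
    also have "(\<lambda>x. \<Sum>k\<le>n. real ((n-k) choose k) * G k (n-2*k) x / B) = s n"
      by (rule ext) (simp add: sfun)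
    finally show ?thesis .
  qed
  have lim: "(\<lambda>n. s n x) \<longlonglongrightarrow> f x" for x
  proof (cases "x \<in> {0<..<1}")
    case True
    have "(\<lambda>n. g x * FF x (1-x) n / B) \<longlonglongrightarrow> g x * (1 / (1 + x)) / B"
      using True Bpos by (intro tendsto_intros FF_lim) auto
    then show ?thesis unfolding s_def f_def by simp
  next
    case False
    then have "g x = 0" unfolding g_def by (auto simp: indicator_def)
    then show ?thesis unfolding s_def f_def by simp
  qed
  have wint: "integrable lborel (\<lambda>x. 2 * g x / B)"
    using Gint[of 0 0] unfolding G_def by (intro integrable_divide integrable_mult_right) simp
  have bound: "norm (s n x) \<le> 2 * g x / B" for n x
  proof (cases "x \<in> {0..1}")
    case True
    have "\<bar>FF x (1-x) n\<bar> \<le> 2" using True FF_bound by auto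
    then have "g x * \<bar>FF x (1-x) n\<bar> \<le> g x * 2" using gnn by (intro mult_left_mono) auto
    moreover have "norm (s n x) = g x * \<bar>FF x (1-x) n\<bar> / B"
      using gnn[of x] Bpos by (simp add: s_def abs_mult)
    ultimately show ?thesis using Bpos
      by (metis divide_right_mono less_imp_le mult.commute)
  next
    case False
    then show ?thesis unfolding s_def g_def by simp
  qed
  have fm: "f \<in> borel_measurable lborel"
    by (rule borel_measurable_LIMSEQ_real[OF lim]) (rule borel_measurable_integrable[OF sint])
  have "(\<lambda>n. integral\<^sup>L lborel (s n)) \<longlonglongrightarrow> integral\<^sup>L lborel f"
  proof (rule integral_dominated_convergence[OF fm _ wint])
    show "s n \<in> borel_measurable lborel" for n by (rule borel_measurable_integrable[OF sint])
    show "AE x in lborel. (\<lambda>n. s n x) \<longlonglongrightarrow> f x" using lim by (intro AE_I2)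
    show "AE x in lborel. norm (s n x) \<le> 2 * g x / B" for n using bound by (intro AE_I2)
  qed
  moreover have "integral\<^sup>L lborel f = (LBINT x=0..1. x powr (t / h - 1) * (1 - x) powr ((1 - t) / h - 1)
                    / ((1 + x) * Beta (t / h) ((1 - t) / h)))"
  proof -
    have "(LBINT x=0..1. x powr (t / h - 1) * (1 - x) powr ((1 - t) / h - 1)
                    / ((1 + x) * Beta (t / h) ((1 - t) / h)))
        = (LBINT x=ereal 0..ereal 1. x powr (a - 1) * (1 - x) powr (b - 1) / ((1 + x) * B))"
      by (simp add: zero_ereal_def one_ereal_def a_def b_def B_def)
    also have "\<dots> = (LBINT x:{0..1}. x powr (a - 1) * (1 - x) powr (b - 1) / ((1 + x) * B))"
      by (rule interval_integral_Icc) simp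
    also have "\<dots> = integral\<^sup>L lborel f"
      unfolding set_lebesgue_integral_def f_def g_def
      by (rule Bochner_Integration.integral_cong[OF refl]) simp
    finally show ?thesis by simp
  qed
  ultimately show ?thesis using sum_eq by simp
qed

end
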